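(* Let $\Lambda$ be a finite $k$-graph without sources, $F$ a well chosen sequence for $\Lambda$, and $C$ an $F$-harmonic component. Then there is a unique vector $x_F^C\in[0,\infty)^{\Lambda^0}$ with $\sum_v (x_F^C)_v=1$ such that (1) $A_Fx_F^C=\rho(A_F^C)\,x_F^C$, and (2) $(x_F^C)_v=0$ for all $v\notin\overline C$. Moreover $(x_F^C)_v>0$ for all $v\in\overline C$, and $x_F^C|_C=c\,x$ for some $c>0$, where $x$ is the Perron–Frobenius eigenvector of $A_F^C$ of unit $1$-norm.
   Context: A $k$-graph $(\Lambda,d)$ is a countable small category with functor $d:\Lambda\to\mathbb N^k$ having the unique factorisation property (for $d(\lambda)=m+n$ there are unique $\mu,\nu$ with $d(\mu)=m,d(\nu)=n,\lambda=\mu\nu$). $\Lambda^0=d^{-1}(0)$ are the vertices, $\Lambda^n=d^{-1}(n)$, $r,s$ range and source, $v\Lambda^nw=\{\lambda\in\Lambda^n:r(\lambda)=v,s(\lambda)=w\}$, $v\Lambda w=\bigcup_n v\Lambda^n w$, and for $V,W\subseteq\Lambda^0$, $V\Lambda W=\bigcup_{v\in V,w\in W}v\Lambda w$. Finite: each $\Lambda^n$ finite; without sources: $v\Lambda^n\neq\emptyset$ for all $v,n$. Vertex matrices $A_i(v,w)=|v\Lambda^{e_i}w|$, $A^n=\prod_iA_i^{n_i}$ (so $A^n(v,w)=|v\Lambda^nw|$). Define $v\le w$ iff $v\Lambda w\ne\emptyset$ and $v\sim w$ iff $v\le w$ and $w\le v$; the equivalence classes are components. A component $C$ is trivial if $C\Lambda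 C=\{v\}$ for a single vertex $v$, non-trivial otherwise. The closure of $V\subseteq\Lambda^0$ is $\overline V=\{w\in\Lambda^0:w\Lambda V\ne\emptyset\}$. For a $\Lambda^0\times\Lambda^0$ matrix $B$ and $R,S\subseteq\Lambda^0$, $B^{R,S}$ is the submatrix with rows $R$ and columns $S$, $B^S=B^{S,S}$, $x|_S$ is restriction of a vector, and $\rho$ denotes spectral radius. For a finite sequence $F=(a_1,\dots,a_m)$ in $\mathbb N^k\setminus\{0\}$ (repetitions allowed), $A_F=\sum_{j=1}^mA^{a_j}$, and $A_F^{R,S}$ means $(A_F)^{R,S}$; $F$ is well chosen if for all $v,w$: $A_F(v,w)>0$ iff $v\Lambda^lw\neq\emptyset$ for some $l\in\mathbb N^k\setminus\{0\}$. A non-trivial component $C$ is $F$-harmonic if either $\overline C\setminus C=\emptyset$ or $\rho(A_F^C)>\rho(A_F^{\overline C\setminus C})$. *)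

theory Defs
  imports Complex_Main "HOL-Library.Countable_Set"
begin

text \<open>A k-graph is represented by a set P of morphisms of type 'p (objects are
identified with identity morphisms, as in the paper), range and source maps
r, s, a composition cmp (meaningful for composable pairs), and a degree
map d into \<nat>^k, where \<nat>^k is rendered as 'k \<Rightarrow> nat for a finite type 'k
with CARD('k) = k.\<close>

definition kgraph ::
  "'p set \<Rightarrow> ('p \<Rightarrow> 'p) \<Rightarrow> ('p \<Rightarrow> 'p) \<Rightarrow> ('p \<Rightarrow> 'p \<Rightarrow> 'p) \<Rightarrow> ('p \<Rightarrow> ('k::finite \<Rightarrow> nat)) \<Rightarrow> bool"
  where "kgraph P r s cmp d \<longleftrightarrow>
    countable P \<and>
    (\<forall>l\<in>P. r l \<in> P \<and> s l \<in> P) \<and>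
    (\<forall>l\<in>P. r (r l) = r l \<and> s (r l) = r l \<and> r (s l) = s l \<and> s (s l) = s l) \<and>
    (\<forall>l\<in>P. cmp (r l) l = l \<and> cmp l (s l) = l) \<and>
    (\<forall>l\<in>P. \<forall>u\<in>P. s l = r u \<longrightarrow>
        cmp l u \<in> P \<and> r (cmp l u) = r l \<and> s (cmp l u) = s u) \<and>
    (\<forall>l\<in>P. \<forall>u\<in>P. \<forall>t\<in>P. s l = r u \<longrightarrow> s u = r t \<longrightarrow>
        cmp (cmp l u) t = cmp l (cmp u t)) \<and>
    (\<forall>l\<in>P. d (r l) = (\<lambda>_. 0)) \<and>
    (\<forall>l\<in>P. \<forall>u\<in>P. s l = r u \<longrightarrow> d (cmp l u) = (\<lambda>i. d l i + d u i)) \<and>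
    (\<forall>l\<in>P. \<forall>m n. d l = (\<lambda>i. m i + n i) \<longrightarrow>
        (\<exists>!ut. case ut of (u, t) \<Rightarrow> u \<in> P \<and> t \<in> P \<and> s u = r t \<and> d u = m \<and> d t = n \<and> l = cmp u t))"

definition verts :: "'p set \<Rightarrow> ('p \<Rightarrow> ('k \<Rightarrow> nat)) \<Rightarrow> 'p set"
  where "verts P d = {l\<in>P. d l = (\<lambda>_. 0)}"

definition finite_kgraph :: "'p set \<Rightarrow> ('p \<Rightarrow> ('k \<Rightarrow> nat)) \<Rightarrow> bool"
  where "finite_kgraph P d \<longleftrightarrow> (\<forall>n. finite {l\<in>P. d l = n})"

definition no_sources :: "'p set \<Rightarrow> ('p \<Rightarrow> 'p) \<Rightarrow> ('p \<Rightarrow> ('k \<Rightarrow> nat)) \<Rightarrow> bool"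
  where "no_sources P r d \<longleftrightarrow> (\<forall>v\<in>verts P d. \<forall>n. \<exists>l\<in>P. r l = v \<and> d l = n)"

definition vmat :: "'p set \<Rightarrow> ('p \<Rightarrow> 'p) \<Rightarrow> ('p \<Rightarrow> 'p) \<Rightarrow> ('p \<Rightarrow> ('k \<Rightarrow> nat)) \<Rightarrow> ('k \<Rightarrow> nat) \<Rightarrow> 'p \<Rightarrow> 'p \<Rightarrow> real"
  where "vmat P r s d n v w = real (card {l\<in>P. d l = n \<and> r l = v \<and> s l = w})"

definition AF :: "'p set \<Rightarrow> ('p \<Rightarrow> 'p) \<Rightarrow> ('p \<Rightarrow> 'p) \<Rightarrow> ('p \<Rightarrow> ('k \<Rightarrow> nat)) \<Rightarrow> ('k \<Rightarrow> nat) list \<Rightarrow> 'p \<Rightarrow> 'p \<Rightarrow> real"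
  where "AF P r s d F v w = (\<Sum>j<length F. vmat P r s d (F ! j) v w)"

definition well_chosen :: "'p set \<Rightarrow> ('p \<Rightarrow> 'p) \<Rightarrow> ('p \<Rightarrow> 'p) \<Rightarrow> ('p \<Rightarrow> ('k \<Rightarrow> nat)) \<Rightarrow> ('k \<Rightarrow> nat) list \<Rightarrow> bool"
  where "well_chosen P r s d F \<longleftrightarrow>
    (\<forall>a\<in>set F. a \<noteq> (\<lambda>_. 0)) \<and>
    (\<forall>v\<in>verts P d. \<forall>w\<in>verts P d.
       (AF P r s d F v w > 0 \<longleftrightarrow>
        (\<exists>l. l \<noteq> (\<lambda>_. 0) \<and> (\<exists>p\<in>P. d p = l \<and> r p = v \<and> s p = w))))"

definition vle :: "'p set \<Rightarrow> ('p \<Rightarrow> 'p) \<Rightarrow> ('p \<Rightarrow> 'p) \<Rightarrow> 'p \<Rightarrow> 'p \<Rightarrow> bool"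
  where "vle P r s v w \<longleftrightarrow> (\<exists>l\<in>P. r l = v \<and> s l = w)"

definition is_component :: "'p set \<Rightarrow> ('p \<Rightarrow> 'p) \<Rightarrow> ('p \<Rightarrow> 'p) \<Rightarrow> ('p \<Rightarrow> ('k \<Rightarrow> nat)) \<Rightarrow> 'p set \<Rightarrow> bool"
  where "is_component P r s d C \<longleftrightarrow>
    (\<exists>v\<in>verts P d. C = {w\<in>verts P d. vle P r s v w \<and> vle P r s w v})"

definition paths_between :: "'p set \<Rightarrow> ('p \<Rightarrow> 'p) \<Rightarrow> ('p \<Rightarrow> 'p) \<Rightarrow> 'p set \<Rightarrow> 'p set \<Rightarrow> 'p set"
  where "paths_between P r s V W = {l\<in>P. r l \<in> V \<and> s l \<in> W}"

definition nontrivial_component :: "'p set \<Rightarrow> ('p \<Rightarrow> 'p) \<Rightarrow> ('p \<Rightarrow> 'p) \<Rightarrow> ('p \<Rightarrow> ('k \<Rightarrow> nat)) \<Rightarrow> 'p set \<Rightarrow> bool"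
  where "nontrivial_component P r s d C \<longleftrightarrow>
    is_component P r s d C \<and> \<not> (\<exists>v\<in>verts P d. paths_between P r s C C = {v})"

definition vclosure :: "'p set \<Rightarrow> ('p \<Rightarrow> 'p) \<Rightarrow> ('p \<Rightarrow> 'p) \<Rightarrow> ('p \<Rightarrow> ('k \<Rightarrow> nat)) \<Rightarrow> 'p set \<Rightarrow> 'p set"
  where "vclosure P r s d V = {w\<in>verts P d. paths_between P r s {w} V \<noteq> {}}"

definition spec_rad :: "'p set \<Rightarrow> ('p \<Rightarrow> 'p \<Rightarrow> real) \<Rightarrow> real"
  where "spec_rad S B = Max {cmod u | u. \<exists>x :: 'p \<Rightarrow> complex. (\<exists>v\<in>S. x v \<noteq> 0) \<and>
           (\<forall>v\<in>S. (\<Sum>w\<in>S. complex_of_real (B v w) * x w) = u * x v)}"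

definition F_harmonic :: "'p set \<Rightarrow> ('p \<Rightarrow> 'p) \<Rightarrow> ('p \<Rightarrow> 'p) \<Rightarrow> ('p \<Rightarrow> ('k \<Rightarrow> nat)) \<Rightarrow> ('k \<Rightarrow> nat) list \<Rightarrow> 'p set \<Rightarrow> bool"
  where "F_harmonic P r s d F C \<longleftrightarrow> nontrivial_component P r s d C \<and>
    (vclosure P r s d C - C = {} \<or>
     spec_rad C (AF P r s d F) > spec_rad (vclosure P r s d C - C) (AF P r s d F))"

definition PF_vector :: "'p set \<Rightarrow> ('p \<Rightarrow> 'p \<Rightarrow> real) \<Rightarrow> ('p \<Rightarrow> real) \<Rightarrow> bool"
  where "PF_vector C B x \<longleftrightarrow> (\<forall>v\<in>C. x v > 0) \<and> (\<Sum>v\<in>C. x v) = 1 \<and>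
    (\<forall>v\<in>C. (\<Sum>w\<in>C. B v w * x w) = spec_rad C B * x v)"

end

theory Submission
  imports Defs "Jordan_Normal_Form.Spectral_Radius"
begin

definition enum :: "'a set \<Rightarrow> nat \<Rightarrow> 'a" where
  "enum S = (SOME e. bij_betw e {0..<card S} S)"

lemma enum_bij: "finite S \<Longrightarrow> bij_betw (enum S) {0..<card S} S"
proof -
  assume "finite S"
  then obtain h where "bij_betw h {0..<card S} S" using ex_bij_betw_nat_finite by blast
  thus ?thesis unfolding enum_def by (rule someI[of _ h])
qed

definition mat_of :: "'a set \<Rightarrow> ('a \<Rightarrow> 'a \<Rightarrow> 'b) \<Rightarrow> 'b mat" where
  "mat_of S B = mat (card S) (card S) (\<lambda>(i,j). B (enum S i) (enum S j))"
definition vec_of :: "'a set \<Rightarrow> ('a \<Rightarrow> 'b) \<Rightarrow> 'b vec" where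
  "vec_of S x = vec (card S) (\<lambda>i. x (enum S i))"
definition idx :: "'a set \<Rightarrow> 'a \<Rightarrow> nat" where
  "idx S p = inv_into {0..<card S} (enum S) p"
definition fun_of :: "'a set \<Rightarrow> 'b vec \<Rightarrow> 'a \<Rightarrow> 'b" where
  "fun_of S v p = v $ idx S p"

lemma enum_in: "finite S \<Longrightarrow> i < card S \<Longrightarrow> enum S i \<in> S"
  using enum_bij bij_betwE by fastforce

lemma idx_props: assumes "finite S" "p \<in> S" shows "idx S p < card S" "enum S (idx S p) = p"
proof -
  have b: "bij_betw (enum S) {0..<card S} S" using enum_bij assms by auto
  hence "p \<in> enum S ` {0..<card S}" using assms bij_betw_imp_surj_on by blast
  thus "idx S p < card S" "enum S (idx S p) = p" unfolding idx_def
    using inv_into_into[of p "enum S" "{0..<card S}"] f_inv_into_f[of p "enum S" "{0..<card S}"] by auto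
qed

lemma idx_enum: assumes "finite S" "i < card S" shows "idx S (enum S i) = i"
  unfolding idx_def using enum_bij[OF assms(1)] assms(2)
  by (simp add: bij_betw_imp_inj_on inv_into_f_f)

lemma enum_inj: assumes "finite S" "i < card S" "j < card S" shows "(enum S i = enum S j) = (i = j)"
  using idx_enum[OF assms(1,2)] idx_enum[OF assms(1,3)] by metis

lemma mat_of_carrier[simp]: "mat_of S B \<in> carrier_mat (card S) (card S)"
  by (simp add: mat_of_def)
lemma mat_of_dim[simp]: "dim_row (mat_of S B) = card S" "dim_col (mat_of S B) = card S"
  by (simp_all add: mat_of_def)
lemma vec_of_carrier[simp]: "vec_of S x \<in> carrier_vec (card S)" "dim_vec (vec_of S x) = card S"
  by (simp_all add: vec_of_def)

lemma mult_vec_of: assumes fin: "finite S" and i: "i < card S"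
  shows "(mat_of S B *\<^sub>v vec_of S x) $ i = (\<Sum>w\<in>S. B (enum S i) w * x w)"
proof -
  have "(mat_of S B *\<^sub>v vec_of S x) $ i = row (mat_of S B) i \<bullet> vec_of S x"
    using i by simp
  also have "\<dots> = (\<Sum>j=0..<card S. B (enum S i) (enum S j) * x (enum S j))"
    unfolding scalar_prod_def using i by (simp add: mat_of_def vec_of_def)
  also have "\<dots> = (\<Sum>w\<in>S. B (enum S i) w * x w)"
    by (rule sum.reindex_bij_betw[OF enum_bij[OF fin], where g="\<lambda>w. B (enum S i) w * x w"])
  finally show ?thesis .
qed

lemma vec_of_fun_of: assumes "finite S" "v \<in> carrier_vec (card S)"
  shows "vec_of S (fun_of S v) = v"
  using assms by (intro eq_vecI) (auto simp: vec_of_def fun_of_def idx_enum)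

definition eigset :: "'p set \<Rightarrow> ('p \<Rightarrow> 'p \<Rightarrow> real) \<Rightarrow> complex set" where
  "eigset S B = {u. \<exists>x :: 'p \<Rightarrow> complex. (\<exists>v\<in>S. x v \<noteq> 0) \<and>
           (\<forall>v\<in>S. (\<Sum>w\<in>S. complex_of_real (B v w) * x w) = u * x v)}"

lemma spec_rad_eq: "spec_rad S B = Max (cmod ` eigset S B)"
  unfolding spec_rad_def eigset_def by (rule arg_cong[where f=Max]) blast

abbreviation cmat :: "'p set \<Rightarrow> ('p \<Rightarrow> 'p \<Rightarrow> real) \<Rightarrow> complex mat" where
  "cmat S B \<equiv> mat_of S (\<lambda>a b. complex_of_real (B a b))"

lemma eigset_imp_eigenvalue: assumes fin: "finite S" and u: "u \<in> eigset S B"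
  shows "eigenvalue (cmat S B) u"
proof -
  obtain x v0 where v0: "v0 \<in> S" "x v0 \<noteq> 0"
    and eq: "\<forall>v\<in>S. (\<Sum>w\<in>S. complex_of_real (B v w) * x w) = u * x v"
    using u unfolding eigset_def by blast
  have ne: "vec_of S x \<noteq> 0\<^sub>v (card S)"
  proof
    assume "vec_of S x = 0\<^sub>v (card S)"
    hence "vec_of S x $ idx S v0 = 0" using idx_props[OF fin v0(1)] by simp
    thus False using idx_props[OF fin v0(1)] v0 by (simp add: vec_of_def)
  qed
  have "cmat S B *\<^sub>v vec_of S x = u \<cdot>\<^sub>v vec_of S x"
  proof (rule eq_vecI)
    fix i assume "i < dim_vec (u \<cdot>\<^sub>v vec_of S x)"
    hence i: "i < card S" by simp
    show "(cmat S B *\<^sub>v vec_of S x) $ i = (u \<cdot>\<^sub>v vec_of S x) $ i"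
      unfolding mult_vec_of[OF fin i] using eq enum_in[OF fin i] i by (simp add: vec_of_def)
  qed simp
  thus ?thesis unfolding eigenvalue_def eigenvector_def using ne
    by (intro exI[of _ "vec_of S x"]) simp
qed

lemma eigenvalue_imp_eigset: assumes fin: "finite S" and u: "eigenvalue (cmat S B) u"
  shows "u \<in> eigset S B"
proof -
  obtain v where v: "v \<in> carrier_vec (card S)" "v \<noteq> 0\<^sub>v (card S)" "cmat S B *\<^sub>v v = u \<cdot>\<^sub>v v"
    using u unfolding eigenvalue_def eigenvector_def by auto
  have vv: "vec_of S (fun_of S v) = v" by (rule vec_of_fun_of[OF fin v(1)])
  obtain i where i: "i < card S" "v $ i \<noteq> 0"
    using v(1,2) by (metis carrier_vecD eq_vecI index_zero_vec(1) index_zero_vec(2))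
  have "\<exists>p\<in>S. fun_of S v p \<noteq> 0"
    using i enum_in[OF fin i(1)] by (intro bexI[of _ "enum S i"]) (auto simp: fun_of_def idx_enum fin)
  moreover have "\<forall>p\<in>S. (\<Sum>w\<in>S. complex_of_real (B p w) * fun_of S v w) = u * fun_of S v p"
  proof
    fix p assume p: "p \<in> S"
    have "(\<Sum>w\<in>S. complex_of_real (B p w) * fun_of S v w)
        = (cmat S B *\<^sub>v vec_of S (fun_of S v)) $ idx S p"
      using mult_vec_of[OF fin idx_props(1)[OF fin p], of "\<lambda>a b. complex_of_real (B a b)" "fun_of S v"]
        idx_props(2)[OF fin p] by simp
    also have "\<dots> = u * fun_of S v p" unfolding vv v(3) using idx_props(1)[OF fin p] v(1)
      by (simp add: fun_of_def)
    finally show "(\<Sum>w\<in>S. complex_of_real (B p w) * fun_of S v w) = u * fun_of S v p" .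
  qed
  ultimately show ?thesis unfolding eigset_def by blast
qed

lemma eigset_finite: "finite S \<Longrightarrow> finite (eigset S B)"
  using card_finite_spectrum(1)[OF mat_of_carrier, of S "\<lambda>a b. complex_of_real (B a b)"]
    eigset_imp_eigenvalue unfolding spectrum_def
  by (metis mem_Collect_eq rev_finite_subset subsetI)

lemma eigset_ne: assumes "finite S" "S \<noteq> {}" shows "eigset S B \<noteq> {}"
proof -
  have "card S > 0" using assms by auto
  from spectrum_non_empty[OF mat_of_carrier this]
  show ?thesis using eigenvalue_imp_eigset[OF assms(1)] unfolding spectrum_def by blast
qed

lemma spec_rad_ge: "finite S \<Longrightarrow> u \<in> eigset S B \<Longrightarrow> cmod u \<le> spec_rad S B"
  unfolding spec_rad_eq by (rule Max_ge) (auto simp: eigset_finite)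

lemma spec_rad_in: assumes "finite S" "S \<noteq> {}" shows "\<exists>u\<in>eigset S B. spec_rad S B = cmod u"
proof -
  have "spec_rad S B \<in> cmod ` eigset S B" unfolding spec_rad_eq
    by (rule Max_in) (auto simp: eigset_finite eigset_ne assms)
  thus ?thesis by auto
qed

lemma spec_rad_nonneg: assumes "finite S" "S \<noteq> {}" shows "0 \<le> spec_rad S B"
  using spec_rad_in[OF assms, of B] by (metis norm_ge_zero)

lemma real_eig: assumes "\<exists>v\<in>S. y v \<noteq> 0" "\<forall>v\<in>S. (\<Sum>w\<in>S. B v w * y w) = l * y v"
  shows "complex_of_real l \<in> eigset S B"
proof -
  have "\<forall>v\<in>S. (\<Sum>w\<in>S. complex_of_real (B v w) * complex_of_real (y w)) = complex_of_real l * complex_of_real (y v)"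
  proof
    fix v assume "v \<in> S"
    have "(\<Sum>w\<in>S. complex_of_real (B v w) * complex_of_real (y w)) = complex_of_real (\<Sum>w\<in>S. B v w * y w)"
      by simp
    also have "\<dots> = complex_of_real l * complex_of_real (y v)" using assms(2) \<open>v \<in> S\<close> by simp
    finally show "(\<Sum>w\<in>S. complex_of_real (B v w) * complex_of_real (y w)) = complex_of_real l * complex_of_real (y v)" .
  qed
  thus ?thesis using assms(1) unfolding eigset_def by (intro CollectI exI[of _ "\<lambda>p. complex_of_real (y p)"]) auto
qed

lemma eigset_scale: assumes "u \<in> eigset S (\<lambda>a b. B a b / m)" "m \<noteq> 0"
  shows "complex_of_real m * u \<in> eigset S B"
proof -
  obtain x where x: "\<exists>v\<in>S. x v \<noteq> 0" "\<forall>v\<in>S. (\<Sum>w\<in>S. complex_of_real (B v w / m) * x w) = u * x v"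
    using assms(1) unfolding eigset_def by blast
  have "\<forall>v\<in>S. (\<Sum>w\<in>S. complex_of_real (B v w) * x w) = complex_of_real m * u * x v"
  proof
    fix v assume v: "v \<in> S"
    have "(\<Sum>w\<in>S. complex_of_real (B v w) * x w) = complex_of_real m * (\<Sum>w\<in>S. complex_of_real (B v w / m) * x w)"
      using assms(2) by (simp add: sum_distrib_left of_real_divide)
    thus "(\<Sum>w\<in>S. complex_of_real (B v w) * x w) = complex_of_real m * u * x v" using x(2) v by simp
  qed
  thus ?thesis using x(1) unfolding eigset_def by blast
qed

fun fpow :: "'a set \<Rightarrow> ('a \<Rightarrow> 'a \<Rightarrow> real) \<Rightarrow> nat \<Rightarrow> 'a \<Rightarrow> 'a \<Rightarrow> real" where
  "fpow S B 0 v w = (if v = w then 1 else 0)"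
| "fpow S B (Suc k) v w = (\<Sum>x\<in>S. fpow S B k v x * B x w)"

lemma pow_cmat: assumes fin: "finite S" and i: "i < card S" and j: "j < card S"
  shows "(cmat S B ^\<^sub>m k) $$ (i,j) = complex_of_real (fpow S B k (enum S i) (enum S j))"
  using j
proof (induction k arbitrary: j)
  case 0
  then show ?case using i enum_inj[OF fin i 0] by (simp add: mat_of_def)
next
  case (Suc k)
  have C: "cmat S B ^\<^sub>m k \<in> carrier_mat (card S) (card S)"
    by (rule pow_carrier_mat[OF mat_of_carrier])
  have "(cmat S B ^\<^sub>m Suc k) $$ (i,j) = row (cmat S B ^\<^sub>m k) i \<bullet> col (cmat S B) j"
    using C i Suc.prems by simp
  also have "\<dots> = (\<Sum>l=0..<card S. (cmat S B ^\<^sub>m k) $$ (i,l) * cmat S B $$ (l,j))"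
    unfolding scalar_prod_def using C i Suc.prems by simp
  also have "\<dots> = (\<Sum>l=0..<card S. complex_of_real (fpow S B k (enum S i) (enum S l) * B (enum S l) (enum S j)))"
    using Suc.IH Suc.prems by (intro sum.cong) (auto simp: mat_of_def)
  also have "\<dots> = (\<Sum>x\<in>S. complex_of_real (fpow S B k (enum S i) x * B x (enum S j)))"
    by (rule sum.reindex_bij_betw[OF enum_bij[OF fin], where g="\<lambda>x. complex_of_real (fpow S B k (enum S i) x * B x (enum S j))"])
  also have "\<dots> = complex_of_real (fpow S B (Suc k) (enum S i) (enum S j))" by simp
  finally show ?case .
qed

lemma fpow_nonneg: assumes "\<forall>v\<in>S. \<forall>w\<in>S. 0 \<le> B v w" "w \<in> S"
  shows "0 \<le> fpow S B k v w"
  using assms(2)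
proof (induction k arbitrary: w)
  case 0 then show ?case by simp
next
  case (Suc k) then show ?case using assms(1) by (auto intro!: sum_nonneg)
qed

lemma fpow_growth: assumes fin: "finite S" and Bnn: "\<forall>v\<in>S. \<forall>w\<in>S. 0 \<le> B v w"
  and unn: "\<forall>v\<in>S. 0 \<le> u v" and sub: "\<forall>v\<in>S. m * u v \<le> (\<Sum>w\<in>S. B v w * u w)"
  and m: "0 \<le> m" and v: "v \<in> S"
  shows "m ^ k * u v \<le> (\<Sum>w\<in>S. fpow S B k v w * u w)"
proof (induction k)
  case 0
  have "(\<Sum>w\<in>S. fpow S B 0 v w * u w) = (\<Sum>w\<in>S. if v = w then u w else 0)"
    by (intro sum.cong) auto
  also have "\<dots> = u v" using fin v by simp
  finally show ?case by simp
next
  case (Suc k)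
  have "(\<Sum>w\<in>S. fpow S B (Suc k) v w * u w) = (\<Sum>w\<in>S. \<Sum>x\<in>S. fpow S B k v x * B x w * u w)"
    by (simp add: sum_distrib_right)
  also have "\<dots> = (\<Sum>x\<in>S. \<Sum>w\<in>S. fpow S B k v x * B x w * u w)" by (rule sum.swap)
  also have "\<dots> = (\<Sum>x\<in>S. fpow S B k v x * (\<Sum>w\<in>S. B x w * u w))"
    by (simp add: sum_distrib_left mult.assoc)
  also have "\<dots> \<ge> (\<Sum>x\<in>S. fpow S B k v x * (m * u x))"
    using sub fpow_nonneg[OF Bnn] by (intro sum_mono mult_left_mono) auto
  finally have 1: "(\<Sum>x\<in>S. fpow S B k v x * (m * u x)) \<le> (\<Sum>w\<in>S. fpow S B (Suc k) v w * u w)" .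
  have "(\<Sum>x\<in>S. fpow S B k v x * (m * u x)) = m * (\<Sum>x\<in>S. fpow S B k v x * u x)"
    by (simp add: sum_distrib_left algebra_simps)
  also have "\<dots> \<ge> m * (m ^ k * u v)" using Suc.IH m by (intro mult_left_mono) auto
  finally show ?case using 1 by simp
qed

lemma GL: assumes fin: "finite S" and Bnn: "\<forall>v\<in>S. \<forall>w\<in>S. 0 \<le> B v w"
  and unn: "\<forall>v\<in>S. 0 \<le> u v" and v0: "v0 \<in> S" "u v0 > 0"
  and sub: "\<forall>v\<in>S. \<mu> * u v \<le> (\<Sum>w\<in>S. B v w * u w)" and mu: "\<mu> > 0"
  shows "\<mu> \<le> spec_rad S B"
proof (rule ccontr)
  assume "\<not> ?thesis"
  hence lt: "spec_rad S B < \<mu>" by simp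
  have ne: "S \<noteq> {}" using v0 by auto
  have sr0: "0 \<le> spec_rad S B" by (rule spec_rad_nonneg[OF fin ne])
  define m where "m = (spec_rad S B + \<mu>) / 2"
  have m: "0 < m" "spec_rad S B < m" "m < \<mu>" using lt sr0 unfolding m_def by auto
  define B' where "B' = (\<lambda>a b. B a b / m)"
  have npos: "card S > 0" using fin ne by auto
  have "spectral_radius (cmat S B') < 1"
  proof -
    from spectral_radius_mem_max(1)[OF mat_of_carrier npos]
    obtain k where k: "k \<in> spectrum (cmat S B')" "spectral_radius (cmat S B') = norm k" by auto
    have "k \<in> eigset S B'" using k(1) eigenvalue_imp_eigset[OF fin] unfolding spectrum_def by auto
    hence "complex_of_real m * k \<in> eigset S B" using eigset_scale[of k S B m] m unfolding B'_def by auto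
    from spec_rad_ge[OF fin this] have "m * norm k \<le> spec_rad S B" using m by (simp add: norm_mult)
    hence "m * norm k < m * 1" using m by linarith
    hence "norm k < 1" using m by (simp only: mult_less_cancel_left_pos)
    thus ?thesis using k(2) by simp
  qed
  from spectral_radius_jnf_norm_bound_less_1_upper_triangular[OF mat_of_carrier this]
  obtain c where c: "\<And>k. norm_bound (cmat S B' ^\<^sub>m k) c" by auto
  have bound: "\<bar>fpow S B' k v w\<bar> \<le> c" if "v \<in> S" "w \<in> S" for k v w
  proof -
    have C: "cmat S B' ^\<^sub>m k \<in> carrier_mat (card S) (card S)"
      by (rule pow_carrier_mat[OF mat_of_carrier])
    have "norm ((cmat S B' ^\<^sub>m k) $$ (idx S v, idx S w)) \<le> c"
      using c[of k] C idx_props[OF fin that(1)] idx_props[OF fin that(2)] unfolding norm_bound_def by auto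
    thus ?thesis unfolding pow_cmat[OF fin idx_props(1)[OF fin that(1)] idx_props(1)[OF fin that(2)]]
      using idx_props[OF fin that(1)] idx_props[OF fin that(2)] by simp
  qed
  have B'nn: "\<forall>v\<in>S. \<forall>w\<in>S. 0 \<le> B' v w" using Bnn m unfolding B'_def by auto
  have sub': "\<forall>v\<in>S. (\<mu>/m) * u v \<le> (\<Sum>w\<in>S. B' v w * u w)"
  proof
    fix v assume "v \<in> S"
    have "(\<Sum>w\<in>S. B' v w * u w) = (\<Sum>w\<in>S. B v w * u w) / m" unfolding B'_def
      by (simp add: sum_divide_distrib)
    thus "(\<mu>/m) * u v \<le> (\<Sum>w\<in>S. B' v w * u w)" using sub \<open>v \<in> S\<close> m
      by (simp add: divide_right_mono)
  qed
  define U where "U = (\<Sum>w\<in>S. u w)"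
  have growth: "(\<mu>/m) ^ k * u v0 \<le> c * U" for k
  proof -
    have "(\<mu>/m) ^ k * u v0 \<le> (\<Sum>w\<in>S. fpow S B' k v0 w * u w)"
      by (rule fpow_growth[OF fin B'nn unn sub' _ v0(1)]) (use m mu in auto)
    also have "\<dots> \<le> (\<Sum>w\<in>S. c * u w)"
    proof (rule sum_mono)
      fix w assume w: "w \<in> S"
      have "fpow S B' k v0 w * u w \<le> \<bar>fpow S B' k v0 w\<bar> * u w" using unn w
        by (intro mult_right_mono) auto
      also have "\<dots> \<le> c * u w" using bound[OF v0(1) w] unn w by (intro mult_right_mono) auto
      finally show "fpow S B' k v0 w * u w \<le> c * u w" .
    qed
    also have "\<dots> = c * U" unfolding U_def by (simp add: sum_distrib_left)
    finally show ?thesis .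
  qed
  have "1 < \<mu>/m" using m by simp
  from real_arch_pow[OF this, of "c * U / u v0"] obtain k where "c * U / u v0 < (\<mu>/m) ^ k" by auto
  hence "c * U < (\<mu>/m) ^ k * u v0" using v0(2) by (simp add: divide_less_eq)
  thus False using growth[of k] by simp
qed

lemma PF: assumes fin: "finite S" and ne: "S \<noteq> {}" and pos: "\<forall>v\<in>S. \<forall>w\<in>S. 0 < B v w"
  shows "0 < spec_rad S B" "\<exists>x. PF_vector S B x"
proof -
  define \<sigma> where "\<sigma> = spec_rad S B"
  have s0: "0 \<le> \<sigma>" unfolding \<sigma>_def by (rule spec_rad_nonneg[OF fin ne])
  obtain lam where lam: "lam \<in> eigset S B" "\<sigma> = cmod lam" using spec_rad_in[OF fin ne] unfolding \<sigma>_def by blast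
  obtain z v1 where z: "v1 \<in> S" "z v1 \<noteq> 0" "\<forall>v\<in>S. (\<Sum>w\<in>S. complex_of_real (B v w) * z w) = lam * z v"
    using lam(1) unfolding eigset_def by blast
  define y where "y = (\<lambda>v. cmod (z v))"
  have ynn: "\<forall>v. 0 \<le> y v" unfolding y_def by auto
  have y1: "y v1 > 0" using z unfolding y_def by auto
  have Bnn: "\<forall>v\<in>S. \<forall>w\<in>S. 0 \<le> B v w" using pos by (auto intro: less_imp_le)
  have sub: "\<forall>v\<in>S. \<sigma> * y v \<le> (\<Sum>w\<in>S. B v w * y w)"
  proof
    fix v assume v: "v \<in> S"
    have "\<sigma> * y v = cmod (\<Sum>w\<in>S. complex_of_real (B v w) * z w)"
      using z(3) v lam(2) unfolding y_def by (simp add: norm_mult)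
    also have "\<dots> \<le> (\<Sum>w\<in>S. cmod (complex_of_real (B v w) * z w))" by (rule norm_sum)
    also have "\<dots> = (\<Sum>w\<in>S. B v w * y w)" using Bnn v unfolding y_def
      by (intro sum.cong) (auto simp: norm_mult)
    finally show "\<sigma> * y v \<le> (\<Sum>w\<in>S. B v w * y w)" .
  qed
  have rowpos: "(\<Sum>w\<in>S. B v w * f w) > 0" if "v \<in> S" "\<forall>w\<in>S. 0 \<le> f w" "w1 \<in> S" "f w1 > 0" for v f w1
  proof -
    have "B v w1 * f w1 \<le> (\<Sum>w\<in>S. B v w * f w)"
      by (rule member_le_sum) (use that Bnn fin in auto)
    moreover have "B v w1 * f w1 > 0" using that pos by auto
    ultimately show ?thesis by linarith
  qed
  have eq: "\<forall>v\<in>S. (\<Sum>w\<in>S. B v w * y w) = \<sigma> * y v"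
  proof (rule ccontr)
    assume "\<not> ?thesis"
    then obtain v0 where v0: "v0 \<in> S" "(\<Sum>w\<in>S. B v0 w * y w) \<noteq> \<sigma> * y v0" by blast
    hence v0': "\<sigma> * y v0 < (\<Sum>w\<in>S. B v0 w * y w)" using sub by force
    define u where "u = (\<lambda>v. \<Sum>w\<in>S. B v w * y w)"
    have upos: "\<forall>v\<in>S. u v > 0" unfolding u_def using rowpos[of _ y v1] ynn z(1) y1 by auto
    have gap: "\<sigma> * u v < (\<Sum>w\<in>S. B v w * u w)" if v: "v \<in> S" for v
    proof -
      have "(\<Sum>w\<in>S. B v w * u w) - \<sigma> * u v = (\<Sum>w\<in>S. B v w * (u w - \<sigma> * y w))"
        unfolding u_def by (simp add: sum_subtractf sum_distrib_left algebra_simps)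
      also have "\<dots> > 0" using sub v0' v0(1) unfolding u_def
        by (intro rowpos[OF v, of _ v0]) auto
      finally show ?thesis by simp
    qed
    define \<mu> where "\<mu> = Min ((\<lambda>v. (\<Sum>w\<in>S. B v w * u w) / u v) ` S)"
    have "\<mu> > \<sigma>" unfolding \<mu>_def using fin ne gap upos
      by (subst Min_gr_iff) (auto simp: pos_less_divide_eq)
    have musub: "\<forall>v\<in>S. \<mu> * u v \<le> (\<Sum>w\<in>S. B v w * u w)"
    proof
      fix v assume v: "v \<in> S"
      have "\<mu> \<le> (\<Sum>w\<in>S. B v w * u w) / u v" unfolding \<mu>_def using fin v by (intro Min_le) auto
      thus "\<mu> * u v \<le> (\<Sum>w\<in>S. B v w * u w)" using upos v by (simp add: pos_le_divide_eq)
    qed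
    have "\<mu> \<le> spec_rad S B"
      by (rule GL[OF fin Bnn _ z(1) _ musub]) (use upos z(1) \<open>\<mu> > \<sigma>\<close> s0 in auto)
    thus False using \<open>\<mu> > \<sigma>\<close> unfolding \<sigma>_def by simp
  qed
  have ypos: "\<forall>v\<in>S. \<sigma> * y v > 0" using eq rowpos[of _ y v1] ynn z(1) y1 by auto
  show "0 < spec_rad S B" using ypos z(1) s0 ynn unfolding \<sigma>_def
    by (metis less_eq_real_def mult_zero_left)
  have yp: "\<forall>v\<in>S. y v > 0" using ypos s0 ynn by (metis less_eq_real_def mult_zero_right)
  define Y where "Y = (\<Sum>v\<in>S. y v)"
  have Y: "Y > 0" unfolding Y_def using yp fin ne by (intro sum_pos) auto
  have "PF_vector S B (\<lambda>v. y v / Y)"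
    unfolding PF_vector_def
  proof (intro conjI ballI)
    show "\<And>v. v \<in> S \<Longrightarrow> 0 < y v / Y" using yp Y by auto
    show "(\<Sum>v\<in>S. y v / Y) = 1" using Y unfolding Y_def by (simp add: sum_divide_distrib[symmetric])
    fix v assume v: "v \<in> S"
    have "(\<Sum>w\<in>S. B v w * (y w / Y)) = (\<Sum>w\<in>S. B v w * y w) / Y" by (simp add: sum_divide_distrib)
    thus "(\<Sum>w\<in>S. B v w * (y w / Y)) = spec_rad S B * (y v / Y)" using eq v unfolding \<sigma>_def by simp
  qed
  thus "\<exists>x. PF_vector S B x" by blast
qed

lemma prop_lemma: fixes B :: "'p \<Rightarrow> 'p \<Rightarrow> real" and x y :: "'p \<Rightarrow> real"
  assumes fin: "finite S" and ne: "S \<noteq> {}" and pos: "\<forall>v\<in>S. \<forall>w\<in>S. 0 < B v w"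
  and xp: "\<forall>v\<in>S. 0 < x v" and xe: "\<forall>v\<in>S. (\<Sum>w\<in>S. B v w * x w) = l * x v"
  and yn: "\<forall>v\<in>S. 0 \<le> y v" and ye: "\<forall>v\<in>S. (\<Sum>w\<in>S. B v w * y w) = l * y v"
  shows "\<exists>t\<ge>0. \<forall>v\<in>S. y v = t * x v"
proof -
  define t where "t = Min ((\<lambda>v. y v / x v) ` S)"
  have "t \<in> (\<lambda>v. y v / x v) ` S" unfolding t_def using fin ne by (intro Min_in) auto
  then obtain v0 where v0: "v0 \<in> S" "t = y v0 / x v0" by auto
  have tle: "t * x v \<le> y v" if "v \<in> S" for v
  proof -
    have "t \<le> y v / x v" unfolding t_def using fin that by (intro Min_le) auto
    thus ?thesis using xp that by (simp add: pos_le_divide_eq)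
  qed
  define z where "z = (\<lambda>v. y v - t * x v)"
  have zn: "\<forall>w\<in>S. 0 \<le> B v0 w * z w"
  proof
    fix w assume w: "w \<in> S"
    have "0 \<le> z w" using tle[OF w] unfolding z_def by simp
    moreover have "0 \<le> B v0 w" using pos v0(1) w by (auto intro: less_imp_le)
    ultimately show "0 \<le> B v0 w * z w" by simp
  qed
  have z0: "z v0 = 0" unfolding z_def using v0 xp by auto
  have "(\<Sum>w\<in>S. B v0 w * z w) = (\<Sum>w\<in>S. B v0 w * y w) - t * (\<Sum>w\<in>S. B v0 w * x w)"
  proof -
    have "(\<Sum>w\<in>S. B v0 w * z w) = (\<Sum>w\<in>S. B v0 w * y w - t * (B v0 w * x w))"
      unfolding z_def by (intro sum.cong) (auto simp: right_diff_distrib)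
    also have "\<dots> = (\<Sum>w\<in>S. B v0 w * y w) - (\<Sum>w\<in>S. t * (B v0 w * x w))" by (rule sum_subtractf)
    also have "\<dots> = (\<Sum>w\<in>S. B v0 w * y w) - t * (\<Sum>w\<in>S. B v0 w * x w)" by (simp add: sum_distrib_left)
    finally show ?thesis .
  qed
  also have "\<dots> = l * y v0 - t * (l * x v0)" using xe ye v0(1) by simp
  also have "\<dots> = l * z v0" unfolding z_def by (simp add: right_diff_distrib mult.left_commute)
  finally have "(\<Sum>w\<in>S. B v0 w * z w) = l * z v0" .
  hence "(\<Sum>w\<in>S. B v0 w * z w) = 0" using z0 by simp
  hence "\<forall>w\<in>S. B v0 w * z w = 0" using sum_nonneg_eq_0_iff[OF fin, of "\<lambda>w. B v0 w * z w"] zn by auto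
  hence "\<forall>w\<in>S. z w = 0" using pos v0(1) by (metis less_irrefl mult_eq_0_iff)
  moreover have "t \<ge> 0" using v0 yn xp by auto
  ultimately show ?thesis unfolding z_def by (intro exI[of _ t]) auto
qed

lemma solve_lemma: fixes N :: "'p \<Rightarrow> 'p \<Rightarrow> real"
  assumes fin: "finite S" and inj: "\<forall>y. (\<forall>v\<in>S. (\<Sum>w\<in>S. N v w * y w) = 0) \<longrightarrow> (\<forall>v\<in>S. y v = 0)"
  shows "\<exists>y. \<forall>v\<in>S. (\<Sum>w\<in>S. N v w * y w) = b v"
proof -
  let ?M = "mat_of S N"
  have det: "det ?M \<noteq> 0"
  proof
    assume "det ?M = 0"
    then obtain v where v: "v \<in> carrier_vec (card S)" "v \<noteq> 0\<^sub>v (card S)" "?M *\<^sub>v v = 0\<^sub>v (card S)"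
      using det_0_iff_vec_prod_zero_field[OF mat_of_carrier] by blast
    have vv: "vec_of S (fun_of S v) = v" by (rule vec_of_fun_of[OF fin v(1)])
    have "\<forall>p\<in>S. (\<Sum>w\<in>S. N p w * fun_of S v w) = 0"
    proof
      fix p assume p: "p \<in> S"
      have "(\<Sum>w\<in>S. N p w * fun_of S v w) = (?M *\<^sub>v vec_of S (fun_of S v)) $ idx S p"
        using mult_vec_of[OF fin idx_props(1)[OF fin p], of N "fun_of S v"] idx_props(2)[OF fin p] by simp
      also have "\<dots> = 0" unfolding vv v(3) using idx_props(1)[OF fin p] by simp
      finally show "(\<Sum>w\<in>S. N p w * fun_of S v w) = 0" .
    qed
    hence z: "\<forall>p\<in>S. fun_of S v p = 0" using inj by blast
    obtain i where i: "i < card S" "v $ i \<noteq> 0"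
      using v(1,2) by (metis carrier_vecD eq_vecI index_zero_vec(1) index_zero_vec(2))
    have "fun_of S v (enum S i) = v $ i" by (simp add: fun_of_def idx_enum[OF fin i(1)])
    thus False using z enum_in[OF fin i(1)] i(2) by auto
  qed
  from det_non_zero_imp_unit[OF mat_of_carrier det, of "()"]
  obtain B' where B': "B' \<in> carrier_mat (card S) (card S)" "?M * B' = 1\<^sub>m (card S)"
    unfolding Units_def ring_mat_def by auto
  define y where "y = fun_of S (B' *\<^sub>v vec_of S b)"
  have vy: "vec_of S y = B' *\<^sub>v vec_of S b" unfolding y_def
    by (rule vec_of_fun_of[OF fin]) (use B'(1) in auto)
  have My: "?M *\<^sub>v vec_of S y = vec_of S b"
    unfolding vy using B' by (simp add: assoc_mult_mat_vec[symmetric, of _ "card S" "card S" _ "card S"])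
  show ?thesis
  proof (intro exI ballI)
    fix p assume p: "p \<in> S"
    have "(\<Sum>w\<in>S. N p w * y w) = (?M *\<^sub>v vec_of S y) $ idx S p"
      using mult_vec_of[OF fin idx_props(1)[OF fin p], of N y] idx_props(2)[OF fin p] by simp
    also have "\<dots> = b p" unfolding My using idx_props[OF fin p] by (simp add: vec_of_def)
    finally show "(\<Sum>w\<in>S. N p w * y w) = b p" .
  qed
qed

lemma kg_ident: assumes kg: "kgraph P r s cmp d" and l: "l \<in> P" "d l = (\<lambda>_. 0)"
  shows "r l = l" "s l = l"
proof -
  have rs: "r l \<in> P" "s l \<in> P" using kg l unfolding kgraph_def by auto
  have rr: "s (r l) = r l" "r (s l) = s l" using kg l unfolding kgraph_def by auto
  have cid: "cmp (r l) l = l" "cmp l (s l) = l" using kg l unfolding kgraph_def by auto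
  have dr0: "\<forall>l\<in>P. d (r l) = (\<lambda>_. 0)" using kg unfolding kgraph_def by blast
  have dr: "d (r l) = (\<lambda>_. 0)" "d (s l) = (\<lambda>_. 0)" using dr0 rs(2) l(1) rr(2) by metis+
  define Q where "Q = (\<lambda>ut. case ut of (u, t) \<Rightarrow> u \<in> P \<and> t \<in> P \<and> s u = r t \<and> d u = (\<lambda>_. 0) \<and> d t = (\<lambda>_. 0) \<and> l = cmp u t)"
  have uf: "\<forall>l\<in>P. \<forall>m n. d l = (\<lambda>i. m i + n i) \<longrightarrow>
        (\<exists>!ut. case ut of (u, t) \<Rightarrow> u \<in> P \<and> t \<in> P \<and> s u = r t \<and> d u = m \<and> d t = n \<and> l = cmp u t)"
    using kg unfolding kgraph_def by blast
  have "\<exists>!ut. Q ut" unfolding Q_def using uf[rule_format, OF l(1), of "\<lambda>_. 0" "\<lambda>_. 0"] l(2) by simp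
  then obtain ut where ut: "\<And>y. Q y \<Longrightarrow> y = ut" by (rule ex1E) blast
  have "(r l, l) = ut" by (rule ut) (use l rs rr cid dr in \<open>auto simp: Q_def\<close>)
  moreover have "(l, s l) = ut" by (rule ut) (use l rs rr cid dr in \<open>auto simp: Q_def\<close>)
  ultimately show "r l = l" "s l = l" by auto
qed

lemma kg_comp: assumes kg: "kgraph P r s cmp d" and "p \<in> P" "q \<in> P" "s p = r q"
  shows "\<exists>c\<in>P. r c = r p \<and> s c = s q \<and> d c = (\<lambda>i. d p i + d q i)"
  using assms unfolding kgraph_def by (intro bexI[of _ "cmp p q"]) auto

lemma kg_vert: assumes kg: "kgraph P r s cmp d" and "v \<in> verts P d"
  shows "v \<in> P" "r v = v" "s v = v" "d v = (\<lambda>_. 0)"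
  using assms kg_ident[OF kg] unfolding verts_def by auto

lemma kg_rs: assumes kg: "kgraph P r s cmp d" and "p \<in> P"
  shows "r p \<in> verts P d" "s p \<in> verts P d"
proof -
  have a: "r p \<in> P" "s p \<in> P" "r (s p) = s p" using kg assms(2) unfolding kgraph_def by auto
  have dr0: "\<forall>l\<in>P. d (r l) = (\<lambda>_. 0)" using kg unfolding kgraph_def by blast
  have "d (r p) = (\<lambda>_. 0)" "d (s p) = (\<lambda>_. 0)" using dr0 a assms(2) by metis+
  with a show "r p \<in> verts P d" "s p \<in> verts P d" unfolding verts_def by auto
qed

lemma vle_trans: assumes kg: "kgraph P r s cmp d" and "vle P r s u v" "vle P r s v w"
  shows "vle P r s u w"
  using assms kg_comp[OF kg] unfolding vle_def by metis

lemma AF_nonneg: "0 \<le> AF P r s d F v w"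
  unfolding AF_def vmat_def by (intro sum_nonneg) auto

lemma AF_pos_path: assumes "AF P r s d F v w > 0" shows "\<exists>p\<in>P. r p = v \<and> s p = w"
proof (rule ccontr)
  assume "\<not> ?thesis"
  hence "\<forall>j. {l\<in>P. d l = j \<and> r l = v \<and> s l = w} = {}" by auto
  hence "AF P r s d F v w = 0" unfolding AF_def vmat_def by (intro sum.neutral) (metis card.empty of_nat_0)
  thus False using assms by simp
qed

lemma AF_path_pos: assumes kg: "kgraph P r s cmp d" and wc: "well_chosen P r s d F"
  and p: "p \<in> P" and ne: "r p \<noteq> s p"
  shows "AF P r s d F (r p) (s p) > 0"
proof -
  have "d p \<noteq> (\<lambda>_. 0)" using kg_ident[OF kg p] ne by auto
  thus ?thesis using wc kg_rs[OF kg p] p unfolding well_chosen_def by blast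
qed

lemma AF_path_pos': assumes kg: "kgraph P r s cmp d" and wc: "well_chosen P r s d F"
  and p: "p \<in> P" and ne: "d p \<noteq> (\<lambda>_. 0)"
  shows "AF P r s d F (r p) (s p) > 0"
  using wc kg_rs[OF kg p] p ne unfolding well_chosen_def by blast

lemma vle_refl: "kgraph P r s cmp d \<Longrightarrow> v \<in> verts P d \<Longrightarrow> vle P r s v v"
  unfolding vle_def using kg_vert by metis

lemma comp_sub: "is_component P r s d C \<Longrightarrow> C \<subseteq> verts P d"
  unfolding is_component_def by auto

lemma comp_vle: assumes kg: "kgraph P r s cmp d" and C: "is_component P r s d C"
  and "v \<in> C" "w \<in> C" shows "vle P r s v w"
proof -
  obtain v0 where "C = {w\<in>verts P d. vle P r s v0 w \<and> vle P r s w v0}"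
    using C unfolding is_component_def by blast
  hence "vle P r s v v0" "vle P r s v0 w" using assms(3,4) by auto
  thus ?thesis by (rule vle_trans[OF kg])
qed

lemma comp_closed: assumes kg: "kgraph P r s cmp d" and C: "is_component P r s d C"
  and "v \<in> C" "w \<in> verts P d" "vle P r s v w" "vle P r s w v" shows "w \<in> C"
proof -
  obtain v0 where "C = {w\<in>verts P d. vle P r s v0 w \<and> vle P r s w v0}"
    using C unfolding is_component_def by blast
  note Ce = this
  hence "vle P r s v0 v" "vle P r s v v0" using assms(3) by auto
  hence "vle P r s v0 w" "vle P r s w v0" using vle_trans[OF kg] assms(5,6) by blast+
  thus ?thesis using Ce assms(4) by blast
qed

lemma comp_ne: assumes kg: "kgraph P r s cmp d" and C: "is_component P r s d C" shows "C \<noteq> {}"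
proof -
  obtain v0 where "v0 \<in> verts P d" "C = {w\<in>verts P d. vle P r s v0 w \<and> vle P r s w v0}"
    using C unfolding is_component_def by blast
  thus ?thesis using vle_refl[OF kg, of v0] by blast
qed

lemma C_pos: assumes kg: "kgraph P r s cmp d" and wc: "well_chosen P r s d F"
  and C: "nontrivial_component P r s d C" and v: "v \<in> C" and w: "w \<in> C"
  shows "AF P r s d F v w > 0"
proof -
  have Cc: "is_component P r s d C" using C unfolding nontrivial_component_def by auto
  have CV: "C \<subseteq> verts P d" by (rule comp_sub[OF Cc])
  show ?thesis
  proof (cases "v = w")
    case False
    obtain p where p: "p \<in> P" "r p = v" "s p = w" using comp_vle[OF kg Cc v w] unfolding vle_def by blast
    have "r p \<noteq> s p" using p(2,3) False by simp
    from AF_path_pos[OF kg wc p(1) this] show ?thesis by (simp only: p(2) p(3))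
  next
    case True
    show ?thesis
    proof (cases "\<exists>u\<in>C. u \<noteq> v")
      case True
      then obtain u where u: "u \<in> C" "u \<noteq> v" by blast
      obtain p where p: "p \<in> P" "r p = v" "s p = u" using comp_vle[OF kg Cc v u(1)] unfolding vle_def by blast
      obtain q where q: "q \<in> P" "r q = u" "s q = v" using comp_vle[OF kg Cc u(1) v] unfolding vle_def by blast
      obtain c where c: "c \<in> P" "r c = v" "s c = v" "d c = (\<lambda>i. d p i + d q i)"
        using kg_comp[OF kg p(1) q(1)] p q by auto
      have "d p \<noteq> (\<lambda>_. 0)"
      proof
        assume "d p = (\<lambda>_. 0)"
        hence "r p = s p" using kg_ident[OF kg p(1)] by metis
        thus False using p(2,3) u(2) by simp
      qed
      hence "\<exists>i. d p i \<noteq> 0" by (simp add: fun_eq_iff)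
      then obtain i where "d p i \<noteq> 0" by blast
      hence ci: "d c i \<noteq> 0" using c(4) by simp
      have "d c \<noteq> (\<lambda>_. 0)"
      proof
        assume "d c = (\<lambda>_. 0)"
        hence "d c i = 0" by simp
        thus False using ci by simp
      qed
      from AF_path_pos'[OF kg wc c(1) this] have "0 < AF P r s d F v v" by (simp only: c(2) c(3))
      thus ?thesis using \<open>v = w\<close> by (simp only:)
    next
      case False
      have Cv: "C = {v}"
      proof
        show "C \<subseteq> {v}" using False by blast
        show "{v} \<subseteq> C" using v by blast
      qed
      have vv: "v \<in> verts P d" using CV v by auto
      have "v \<in> paths_between P r s C C" using kg_vert(1,2,3)[OF kg vv] v unfolding paths_between_def by simp
      moreover have "\<not> (\<exists>v\<in>verts P d. paths_between P r s C C = {v})" using C unfolding nontrivial_component_def by simp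
      hence "paths_between P r s C C \<noteq> {v}" using vv by blast
      ultimately obtain p where p: "p \<in> paths_between P r s C C" "p \<noteq> v" by blast
      hence p': "p \<in> P" "r p = v" "s p = v" using Cv unfolding paths_between_def by auto
      have "d p \<noteq> (\<lambda>_. 0)"
      proof
        assume "d p = (\<lambda>_. 0)"
        hence "r p = p" using kg_ident[OF kg p'(1)] by metis
        thus False using p'(2) p(2) by simp
      qed
      from AF_path_pos'[OF kg wc p'(1) this] have "0 < AF P r s d F v v" by (simp only: p'(2) p'(3))
      thus ?thesis using \<open>v = w\<close> by (simp only:)
    qed
  qed
qed

lemma mem_vclosure: "w \<in> vclosure P r s d C \<longleftrightarrow> w \<in> verts P d \<and> (\<exists>p\<in>P. r p = w \<and> s p \<in> C)"
  unfolding vclosure_def paths_between_def by auto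

lemma CL1: assumes kg: "kgraph P r s cmp d" and "C \<subseteq> verts P d" shows "C \<subseteq> vclosure P r s d C"
proof
  fix x assume "x \<in> C"
  hence x: "x \<in> verts P d" using assms by auto
  show "x \<in> vclosure P r s d C" unfolding mem_vclosure
    using x kg_vert[OF kg x] \<open>x \<in> C\<close> by (intro conjI bexI[of _ x]) auto
qed

lemma CL2: assumes kg: "kgraph P r s cmp d" and C: "is_component P r s d C"
  and v: "v \<in> C" and w: "w \<in> vclosure P r s d C" and A: "AF P r s d F v w > 0"
  shows "w \<in> C"
proof -
  obtain p where p: "p \<in> P" "r p = v" "s p = w" using AF_pos_path[OF A] by blast
  obtain q where q: "q \<in> P" "r q = w" "s q \<in> C" using w unfolding mem_vclosure by blast
  have "vle P r s v w" using p unfolding vle_def by blast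
  moreover have "vle P r s w v" using vle_trans[OF kg _ comp_vle[OF kg C q(3) v], of w] q unfolding vle_def by blast
  ultimately show ?thesis using comp_closed[OF kg C v] w unfolding mem_vclosure by blast
qed

lemma CL3: assumes kg: "kgraph P r s cmp d"
  and v: "v \<in> verts P d" "v \<notin> vclosure P r s d C" and w: "w \<in> vclosure P r s d C"
  shows "AF P r s d F v w = 0"
proof (rule ccontr)
  assume "AF P r s d F v w \<noteq> 0"
  hence A: "AF P r s d F v w > 0" using AF_nonneg[of P r s d F v w] by simp
  obtain p where p: "p \<in> P" "r p = v" "s p = w" using AF_pos_path[OF A] by blast
  obtain q where q: "q \<in> P" "r q = w" "s q \<in> C" using w unfolding mem_vclosure by blast
  obtain c where c: "c \<in> P" "r c = v" "s c = s q" using kg_comp[OF kg p(1) q(1)] p q by auto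
  have "v \<in> vclosure P r s d C" unfolding mem_vclosure using c q(3) v(1) by (intro conjI bexI[of _ c]) auto
  thus False using v(2) by simp
qed

lemma CL4: assumes kg: "kgraph P r s cmp d" and wc: "well_chosen P r s d F"
  and v: "v \<in> vclosure P r s d C" "v \<notin> C" shows "\<exists>w\<in>C. AF P r s d F v w > 0"
proof -
  obtain q where q: "q \<in> P" "r q = v" "s q \<in> C" using v unfolding mem_vclosure by blast
  have "r q \<noteq> s q" using q v by auto
  thus ?thesis using AF_path_pos[OF kg wc q(1)] q by auto
qed

lemma sum_split: fixes g f :: "'a \<Rightarrow> real" assumes "finite V" "C \<subseteq> cl" "cl \<subseteq> V" "\<forall>w. w \<notin> cl \<longrightarrow> f w = 0"
  shows "(\<Sum>w\<in>V. g w * f w) = (\<Sum>w\<in>C. g w * f w) + (\<Sum>w\<in>cl - C. g w * f w)"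
proof -
  have "(\<Sum>w\<in>V. g w * f w) = (\<Sum>w\<in>cl. g w * f w)"
    by (rule sum.mono_neutral_right) (use assms in auto)
  also have "cl = C \<union> (cl - C)" using assms by auto
  hence "(\<Sum>w\<in>cl. g w * f w) = (\<Sum>w\<in>C \<union> (cl - C). g w * f w)" by simp
  also have "\<dots> = (\<Sum>w\<in>C. g w * f w) + (\<Sum>w\<in>cl - C. g w * f w)"
    by (rule sum.union_disjoint) (use assms in \<open>auto intro: finite_subset\<close>)
  finally show ?thesis .
qed

theorem lemma7p6:
  fixes P :: "'p set" and r s :: "'p \<Rightarrow> 'p" and cmp :: "'p \<Rightarrow> 'p \<Rightarrow> 'p"
    and d :: "'p \<Rightarrow> ('k::finite \<Rightarrow> nat)" and F :: "('k \<Rightarrow> nat) list" and C :: "'p set"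
  assumes "kgraph P r s cmp d"
    and "finite_kgraph P d"
    and "no_sources P r d"
    and "well_chosen P r s d F"
    and "F_harmonic P r s d F C"
  shows "\<exists>xF :: 'p \<Rightarrow> real.
     (\<lambda>y. (\<forall>v\<in>verts P d. y v \<ge> 0) \<and> (\<forall>v. v \<notin> verts P d \<longrightarrow> y v = 0) \<and>
          (\<Sum>v\<in>verts P d. y v) = 1 \<and>
          (\<forall>v\<in>verts P d. (\<Sum>w\<in>verts P d. AF P r s d F v w * y w)
                          = spec_rad C (AF P r s d F) * y v) \<and>
          (\<forall>v\<in>verts P d. v \<notin> vclosure P r s d C \<longrightarrow> y v = 0)) xF \<and>
     (\<forall>y. ((\<forall>v\<in>verts P d. y v \<ge> 0) \<and> (\<forall>v. v \<notin> verts P d \<longrightarrow> y v = 0) \<and>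
          (\<Sum>v\<in>verts P d. y v) = 1 \<and>
          (\<forall>v\<in>verts P d. (\<Sum>w\<in>verts P d. AF P r s d F v w * y w)
                          = spec_rad C (AF P r s d F) * y v) \<and>
          (\<forall>v\<in>verts P d. v \<notin> vclosure P r s d C \<longrightarrow> y v = 0)) \<longrightarrow> y = xF) \<and>
     (\<forall>v\<in>vclosure P r s d C. xF v > 0) \<and>
     (\<exists>x. PF_vector C (AF P r s d F) x) \<and>
     (\<forall>x. PF_vector C (AF P r s d F) x \<longrightarrow> (\<exists>c>0. \<forall>v\<in>C. xF v = c * x v))"
proof -
  note kg = assms(1) and wc = assms(4) and harm = assms(5)
  have ntC: "nontrivial_component P r s d C" using harm unfolding F_harmonic_def by blast
  have Cc: "is_component P r s d C" using ntC unfolding nontrivial_component_def by blast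
  define V where "V = verts P d"
  define A where "A = AF P r s d F"
  define cl where "cl = vclosure P r s d C"
  define D where "D = cl - C"
  define \<rho> where "\<rho> = spec_rad C A"
  have finV: "finite V" using assms(2) unfolding finite_kgraph_def V_def verts_def by blast
  have CV: "C \<subseteq> V" unfolding V_def by (rule comp_sub[OF Cc])
  have finC: "finite C" using finV CV finite_subset by blast
  have neC: "C \<noteq> {}" by (rule comp_ne[OF kg Cc])
  have Ccl: "C \<subseteq> cl" unfolding cl_def by (rule CL1[OF kg]) (use CV V_def in simp)
  have clV: "cl \<subseteq> V" unfolding cl_def V_def vclosure_def by auto
  have finD: "finite D" unfolding D_def using finV clV finite_subset by blast
  have Ann: "\<And>v w. 0 \<le> A v w" unfolding A_def by (rule AF_nonneg)
  have Apos: "\<forall>v\<in>C. \<forall>w\<in>C. 0 < A v w" unfolding A_def using C_pos[OF kg wc ntC] by blast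
  have rho: "0 < \<rho>" unfolding \<rho>_def by (rule PF(1)[OF finC neC Apos])
  obtain x where x: "PF_vector C A x" using PF(2)[OF finC neC Apos] by blast
  have xpos: "\<forall>v\<in>C. 0 < x v" and xeig: "\<forall>v\<in>C. (\<Sum>w\<in>C. A v w * x w) = \<rho> * x v"
    using x unfolding PF_vector_def \<rho>_def by auto
  have CD0: "A v w = 0" if "v \<in> C" "w \<in> D" for v w
  proof (rule ccontr)
    assume "A v w \<noteq> 0"
    hence "AF P r s d F v w > 0" using Ann[of v w] unfolding A_def by simp
    from CL2[OF kg Cc that(1) _ this] that(2) show False unfolding D_def cl_def by blast
  qed
  have out0: "A v w = 0" if "v \<in> V" "v \<notin> cl" "w \<in> cl" for v w
    using CL3[OF kg, of v C w F] that unfolding A_def V_def cl_def by blast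
  have harmD: "spec_rad D A < \<rho>" if "D \<noteq> {}"
    using harm that unfolding F_harmonic_def D_def cl_def A_def \<rho>_def by blast
  have DnoEig: "\<forall>v\<in>D. y v = 0" if eig: "\<forall>v\<in>D. (\<Sum>w\<in>D. A v w * y w) = \<rho> * y v" for y
  proof (rule ccontr)
    assume "\<not> ?thesis"
    hence ex: "\<exists>v\<in>D. y v \<noteq> 0" by blast
    hence "D \<noteq> {}" by blast
    from real_eig[OF ex eig] have "cmod (complex_of_real \<rho>) \<le> spec_rad D A" by (rule spec_rad_ge[OF finD])
    thus False using harmD[OF \<open>D \<noteq> {}\<close>] rho by simp
  qed
  have DnoSub: "\<forall>v\<in>D. u v = 0" if nn: "\<forall>v\<in>D. 0 \<le> u v"
    and sub: "\<forall>v\<in>D. \<rho> * u v \<le> (\<Sum>w\<in>D. A v w * u w)" for u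
  proof (rule ccontr)
    assume "\<not> ?thesis"
    then obtain v0 where v0: "v0 \<in> D" "u v0 \<noteq> 0" by blast
    hence "u v0 > 0" using nn by force
    have "\<rho> \<le> spec_rad D A"
      by (rule GL[OF finD _ nn v0(1) \<open>u v0 > 0\<close> sub rho]) (use Ann in auto)
    thus False using harmD v0(1) by force
  qed
  define b where "b = (\<lambda>v. \<Sum>w\<in>C. A v w * x w)"
  define N where "N = (\<lambda>v w. (if v = w then \<rho> else 0) - A v w)"
  have Nsum: "(\<Sum>w\<in>D. N v w * y w) = \<rho> * y v - (\<Sum>w\<in>D. A v w * y w)" if "v \<in> D" for v y
  proof -
    have "(\<Sum>w\<in>D. N v w * y w) = (\<Sum>w\<in>D. (if v = w then \<rho> * y w else 0)) - (\<Sum>w\<in>D. A v w * y w)"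
    proof -
      have "(\<Sum>w\<in>D. N v w * y w) = (\<Sum>w\<in>D. (if v = w then \<rho> * y w else 0) - A v w * y w)"
        by (intro sum.cong) (auto simp: N_def left_diff_distrib)
      also have "\<dots> = (\<Sum>w\<in>D. (if v = w then \<rho> * y w else 0)) - (\<Sum>w\<in>D. A v w * y w)"
        by (rule sum_subtractf)
      finally show ?thesis .
    qed
    also have "(\<Sum>w\<in>D. (if v = w then \<rho> * y w else 0)) = \<rho> * y v" using finD that by simp
    finally show ?thesis .
  qed
  have "\<exists>y. \<forall>v\<in>D. (\<Sum>w\<in>D. N v w * y w) = b v"
  proof (rule solve_lemma[OF finD], intro allI impI)
    fix y assume h: "\<forall>v\<in>D. (\<Sum>w\<in>D. N v w * y w) = 0"
    have "\<forall>v\<in>D. (\<Sum>w\<in>D. A v w * y w) = \<rho> * y v" using h Nsum by simp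
    thus "\<forall>v\<in>D. y v = 0" by (rule DnoEig)
  qed
  then obtain y where ysol: "\<forall>v\<in>D. (\<Sum>w\<in>D. N v w * y w) = b v" by blast
  have yeq: "\<rho> * y v = b v + (\<Sum>w\<in>D. A v w * y w)" if "v \<in> D" for v
    using ysol Nsum[OF that, of y] that by simp
  have bnn: "0 \<le> b v" for v unfolding b_def
  proof (rule sum_nonneg)
    fix w assume "w \<in> C"
    thus "0 \<le> A v w * x w" using xpos Ann[of v w] by (simp add: less_imp_le)
  qed
  have ynn: "\<forall>v\<in>D. 0 \<le> y v"
  proof -
    define u where "u = (\<lambda>v. max (- y v) 0)"
    have unn: "\<forall>v\<in>D. 0 \<le> u v" unfolding u_def by auto
    have "\<forall>v\<in>D. \<rho> * u v \<le> (\<Sum>w\<in>D. A v w * u w)"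
    proof
      fix v assume v: "v \<in> D"
      have R: "0 \<le> (\<Sum>w\<in>D. A v w * u w)" using unn Ann by (auto intro!: sum_nonneg)
      show "\<rho> * u v \<le> (\<Sum>w\<in>D. A v w * u w)"
      proof (cases "0 \<le> y v")
        case True
        hence "u v = 0" unfolding u_def by simp
        thus ?thesis using R by simp
      next
        case False
        hence uv: "u v = - y v" unfolding u_def by simp
        have "(\<Sum>w\<in>D. A v w * (- u w)) \<le> (\<Sum>w\<in>D. A v w * y w)"
          using Ann unfolding u_def by (intro sum_mono mult_left_mono) auto
        hence "- (\<Sum>w\<in>D. A v w * u w) \<le> (\<Sum>w\<in>D. A v w * y w)" by (simp add: sum_negf)
        hence "- (\<Sum>w\<in>D. A v w * u w) \<le> \<rho> * y v" using yeq[OF v] bnn[of v] by linarith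
        thus ?thesis using uv by simp
      qed
    qed
    from DnoSub[OF unn this] have h0: "\<forall>v\<in>D. u v = 0" .
    show ?thesis
    proof
      fix v assume "v \<in> D"
      hence "u v = 0" using h0 by blast
      moreover have "- y v \<le> u v" unfolding u_def by simp
      ultimately show "0 \<le> y v" by linarith
    qed
  qed
  define Y where "Y = (\<lambda>v. if v \<in> C then x v else if v \<in> D then y v else 0)"
  have Ynn: "0 \<le> Y v" for v unfolding Y_def using xpos ynn by (auto intro: less_imp_le)
  have Ysupp: "\<forall>w. w \<notin> cl \<longrightarrow> Y w = 0" unfolding Y_def D_def using Ccl by auto
  have spl: "(\<Sum>w\<in>V. A v w * f w) = (\<Sum>w\<in>C. A v w * f w) + (\<Sum>w\<in>D. A v w * f w)"
    if "\<forall>w. w \<notin> cl \<longrightarrow> f w = 0" for v f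
    unfolding D_def by (rule sum_split[OF finV Ccl clV that])
  have YC: "(\<Sum>w\<in>C. A v w * Y w) = b v" for v unfolding b_def Y_def by (intro sum.cong) auto
  have YD: "(\<Sum>w\<in>D. A v w * Y w) = (\<Sum>w\<in>D. A v w * y w)" for v
    unfolding Y_def D_def by (intro sum.cong) auto
  have Yeig: "(\<Sum>w\<in>V. A v w * Y w) = \<rho> * Y v" if "v \<in> V" for v
  proof -
    have e: "(\<Sum>w\<in>V. A v w * Y w) = b v + (\<Sum>w\<in>D. A v w * y w)"
      using spl[OF Ysupp, of v] YC YD by simp
    show ?thesis
    proof (cases "v \<in> C")
      case True
      have "(\<Sum>w\<in>D. A v w * y w) = 0" using CD0[OF True] by simp
      thus ?thesis using e xeig True unfolding b_def Y_def by simp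
    next
      case nC: False
      show ?thesis
      proof (cases "v \<in> D")
        case True
        thus ?thesis using e yeq[OF True] nC unfolding Y_def by simp
      next
        case False
        hence ncl: "v \<notin> cl" using nC unfolding D_def by auto
        have "b v = 0" unfolding b_def using out0[OF that ncl] Ccl by (auto intro!: sum.neutral)
        moreover have "(\<Sum>w\<in>D. A v w * y w) = 0" using out0[OF that ncl] unfolding D_def by (auto intro!: sum.neutral)
        ultimately show ?thesis using e nC False unfolding Y_def by simp
      qed
    qed
  qed
  obtain c0 where c0: "c0 \<in> C" using neC by blast
  define T where "T = (\<Sum>v\<in>V. Y v)"
  have "Y c0 \<le> T" unfolding T_def by (rule member_le_sum) (use c0 CV finV Ynn in auto)
  hence Tpos: "0 < T" using xpos c0 unfolding Y_def by force
  define xF where "xF = (\<lambda>v. Y v / T)"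
  define Cond where "Cond = (\<lambda>y. (\<forall>v\<in>verts P d. y v \<ge> 0) \<and> (\<forall>v. v \<notin> verts P d \<longrightarrow> y v = 0) \<and>
          (\<Sum>v\<in>verts P d. y v) = 1 \<and>
          (\<forall>v\<in>verts P d. (\<Sum>w\<in>verts P d. AF P r s d F v w * y w)
                          = spec_rad C (AF P r s d F) * y v) \<and>
          (\<forall>v\<in>verts P d. v \<notin> vclosure P r s d C \<longrightarrow> y v = 0))"
  have CondE: "(\<forall>v\<in>V. z v \<ge> 0) \<and> (\<forall>v. v \<notin> V \<longrightarrow> z v = 0) \<and> (\<Sum>v\<in>V. z v) = 1 \<and>
      (\<forall>v\<in>V. (\<Sum>w\<in>V. A v w * z w) = \<rho> * z v) \<and> (\<forall>v\<in>V. v \<notin> cl \<longrightarrow> z v = 0)" if "Cond z" for z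
    using that unfolding Cond_def V_def A_def \<rho>_def cl_def by blast
  have xFcond: "Cond xF"
  proof -
    have "(\<forall>v\<in>V. xF v \<ge> 0) \<and> (\<forall>v. v \<notin> V \<longrightarrow> xF v = 0) \<and> (\<Sum>v\<in>V. xF v) = 1 \<and>
      (\<forall>v\<in>V. (\<Sum>w\<in>V. A v w * xF w) = \<rho> * xF v) \<and> (\<forall>v\<in>V. v \<notin> cl \<longrightarrow> xF v = 0)"
    proof (intro conjI ballI allI impI)
      show "\<And>v. 0 \<le> xF v" unfolding xF_def using Ynn Tpos by simp
      show "\<And>v. v \<notin> V \<Longrightarrow> xF v = 0" unfolding xF_def using Ysupp clV by auto
      show "(\<Sum>v\<in>V. xF v) = 1" unfolding xF_def using Tpos unfolding T_def by (simp add: sum_divide_distrib[symmetric])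
      show "\<And>v. v \<notin> cl \<Longrightarrow> xF v = 0" unfolding xF_def using Ysupp by auto
      fix v assume v: "v \<in> V"
      have "(\<Sum>w\<in>V. A v w * xF w) = (\<Sum>w\<in>V. A v w * Y w) / T" unfolding xF_def
        by (simp add: sum_divide_distrib)
      thus "(\<Sum>w\<in>V. A v w * xF w) = \<rho> * xF v" using Yeig[OF v] unfolding xF_def by simp
    qed
    thus ?thesis unfolding Cond_def V_def A_def \<rho>_def cl_def by blast
  qed
  have zsupp: "\<forall>w. w \<notin> cl \<longrightarrow> z w = 0" if "Cond z" for z
    using CondE[OF that] clV by blast
  have zC: "\<forall>v\<in>C. (\<Sum>w\<in>C. A v w * z w) = \<rho> * z v" if "Cond z" for z
  proof
    fix v assume v: "v \<in> C"
    have "(\<Sum>w\<in>D. A v w * z w) = 0" using CD0[OF v] by simp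
    thus "(\<Sum>w\<in>C. A v w * z w) = \<rho> * z v" using spl[OF zsupp[OF that], of v] CondE[OF that] v CV by auto
  qed
  have zD: "(\<Sum>w\<in>C. A v w * z w) + (\<Sum>w\<in>D. A v w * z w) = \<rho> * z v" if "Cond z" "v \<in> D" for z v
    using spl[OF zsupp[OF that(1)], of v] CondE[OF that(1)] that(2) clV unfolding D_def by auto
  have zprop: "\<exists>t\<ge>0. \<forall>v\<in>C. z v = t * x v" if "Cond z" for z
    by (rule prop_lemma[OF finC neC Apos xpos xeig]) (use CondE[OF that] CV zC[OF that] in auto)
  have Yposcl: "0 < Y v" if vcl: "v \<in> cl" for v
  proof (cases "v \<in> C")
    case True thus ?thesis using xpos unfolding Y_def by auto
  next
    case False
    obtain w0 where w0: "w0 \<in> C" "AF P r s d F v w0 > 0"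
      using CL4[OF kg wc, of v C] vcl False unfolding cl_def by blast
    have vV: "v \<in> V" using vcl clV by auto
    have "A v w0 * Y w0 \<le> (\<Sum>w\<in>V. A v w * Y w)"
      by (rule member_le_sum) (use w0 CV finV Ynn Ann in \<open>auto intro: mult_nonneg_nonneg\<close>)
    moreover have "A v w0 * Y w0 > 0" using w0 xpos unfolding A_def Y_def by auto
    ultimately have "\<rho> * Y v > 0" using Yeig[OF vV] by simp
    thus ?thesis using rho by (simp add: zero_less_mult_iff)
  qed
  have xFpos: "\<forall>v\<in>cl. xF v > 0" unfolding xF_def using Yposcl Tpos by auto
  obtain t0 where t0: "t0 \<ge> 0" "\<forall>v\<in>C. xF v = t0 * x v" using zprop[OF xFcond] by blast
  have t0pos: "t0 > 0" using t0 xFpos c0 Ccl by (metis less_eq_real_def mult_zero_left subsetD)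
  have uniq: "z = xF" if cz: "Cond z" for z
  proof -
    obtain t1 where t1: "t1 \<ge> 0" "\<forall>v\<in>C. z v = t1 * x v" using zprop[OF cz] by blast
    define w' where "w' = (\<lambda>v. t0 * z v - t1 * xF v)"
    have w'D: "\<forall>v\<in>D. (\<Sum>w\<in>D. A v w * w' w) = \<rho> * w' v"
    proof
      fix v assume v: "v \<in> D"
      have c1: "(\<Sum>w\<in>C. A v w * z w) = t1 * (\<Sum>w\<in>C. A v w * x w)"
        using t1(2) by (simp add: sum_distrib_left mult.left_commute)
      have c2: "(\<Sum>w\<in>C. A v w * xF w) = t0 * (\<Sum>w\<in>C. A v w * x w)"
        using t0(2) by (simp add: sum_distrib_left mult.left_commute)
      have "(\<Sum>w\<in>D. A v w * w' w) = t0 * (\<Sum>w\<in>D. A v w * z w) - t1 * (\<Sum>w\<in>D. A v w * xF w)"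
        unfolding w'_def by (simp add: sum_subtractf sum_distrib_left right_diff_distrib mult.left_commute)
      also have "\<dots> = t0 * (\<rho> * z v - (\<Sum>w\<in>C. A v w * z w)) - t1 * (\<rho> * xF v - (\<Sum>w\<in>C. A v w * xF w))"
      proof -
        have e1: "(\<Sum>w\<in>D. A v w * z w) = \<rho> * z v - (\<Sum>w\<in>C. A v w * z w)" using zD[OF cz v] by linarith
        have e2: "(\<Sum>w\<in>D. A v w * xF w) = \<rho> * xF v - (\<Sum>w\<in>C. A v w * xF w)" using zD[OF xFcond v] by linarith
        show ?thesis by (simp only: e1 e2)
      qed
      also have "\<dots> = \<rho> * w' v" unfolding c1 c2 w'_def by (simp add: algebra_simps)
      finally show "(\<Sum>w\<in>D. A v w * w' w) = \<rho> * w' v" .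
    qed
    have w0D: "\<forall>v\<in>D. w' v = 0" by (rule DnoEig[OF w'D])
    have all: "t0 * z v = t1 * xF v" for v
    proof (cases "v \<in> cl")
      case True
      show ?thesis
      proof (cases "v \<in> C")
        case True thus ?thesis using t0 t1 by simp
      next
        case False thus ?thesis using w0D \<open>v \<in> cl\<close> unfolding w'_def D_def by auto
      qed
    next
      case False thus ?thesis using zsupp[OF cz] zsupp[OF xFcond] by simp
    qed
    have "t0 * (\<Sum>v\<in>V. z v) = t1 * (\<Sum>v\<in>V. xF v)" using all by (simp add: sum_distrib_left)
    hence "t0 = t1" using CondE[OF cz] CondE[OF xFcond] by simp
    hence "\<forall>v. z v = xF v" using all t0pos by simp
    thus ?thesis by blast
  qed
  have last: "\<exists>c>0. \<forall>v\<in>C. xF v = c * x' v" if x': "PF_vector C (AF P r s d F) x'" for x'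
  proof -
    have x'p: "\<forall>v\<in>C. 0 < x' v" and x'e: "\<forall>v\<in>C. (\<Sum>w\<in>C. A v w * x' w) = \<rho> * x' v"
      using x' unfolding PF_vector_def A_def \<rho>_def by auto
    obtain c where c: "c \<ge> 0" "\<forall>v\<in>C. xF v = c * x' v"
      using prop_lemma[OF finC neC Apos x'p x'e, of xF] CondE[OF xFcond] CV zC[OF xFcond] by auto
    have "c > 0" using c xFpos c0 Ccl by (metis less_eq_real_def mult_zero_left subsetD)
    thus ?thesis using c by blast
  qed
  have ex: "\<exists>x. PF_vector C (AF P r s d F) x" using x unfolding A_def by blast
  show ?thesis
    apply (rule exI[of _ xF])
    using xFcond uniq xFpos ex last unfolding Cond_def cl_def by blast
qed

end
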